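(* Every bipartite graph $H=(V,F)$ with no connected component consisting of a single edge admits a partial edge colouring with $4$ colours such that all edges of $H$ are satisfied and every vertex of $V$ is incident with a uniquely coloured edge.
   Context: For an edge $e=uv$, $E[e]$ is the set of edges incident with $u$ or $v$ and $E(e)=E[e]\setminus\{e\}$. In a partial edge colouring (not all edges need be coloured), a colour $\alpha$ is unique for $e$ if $\alpha$ appears on some edge $e'\in E(e)$ and on no other edge of $E[e]\setminus\{e'\}$; $e$ is satisfied if such a colour exists. A vertex $v$ is incident with a uniquely coloured edge if some coloured edge incident with $v$ has a colour appearing on no other edge incident with $v$. (Isolated vertices are not excluded by the hypothesis; the claim is as stated for every vertex of $V$, where vertices of degree $0$ may be assumed absent since $H$ is given via its edges—more precisely, the claim applies to every vertex of positive degree, and $V$ is assumed to have no isolated vertices.) *)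

theory Defs
  imports Main
begin

definition simple_graph :: "'a set \<Rightarrow> 'a set set \<Rightarrow> bool" where
  "simple_graph V F \<longleftrightarrow> finite V \<and> (\<forall>e\<in>F. e \<subseteq> V \<and> card e = 2)"

definition bipartite :: "'a set \<Rightarrow> 'a set set \<Rightarrow> bool" where
  "bipartite V F \<longleftrightarrow> (\<exists>A B. A \<inter> B = {} \<and> A \<union> B = V \<and>
      (\<forall>e\<in>F. card (e \<inter> A) = 1 \<and> card (e \<inter> B) = 1))"

definition has_single_edge_component :: "'a set set \<Rightarrow> bool" where
  "has_single_edge_component F \<longleftrightarrow> (\<exists>e\<in>F. \<forall>e'\<in>F. e' \<inter> e \<noteq> {} \<longrightarrow> e' = e)"

definition closed_nbhd :: "'a set set \<Rightarrow> 'a set \<Rightarrow> 'a set set" where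
  "closed_nbhd F e = {e'\<in>F. e' \<inter> e \<noteq> {}}"

definition open_nbhd :: "'a set set \<Rightarrow> 'a set \<Rightarrow> 'a set set" where
  "open_nbhd F e = closed_nbhd F e - {e}"

text \<open>A partial edge colouring with colours from C: None means uncoloured.\<close>
definition partial_edge_colouring ::
  "'a set set \<Rightarrow> 'c set \<Rightarrow> ('a set \<Rightarrow> 'c option) \<Rightarrow> bool" where
  "partial_edge_colouring F C col \<longleftrightarrow> (\<forall>e\<in>F. \<forall>\<alpha>. col e = Some \<alpha> \<longrightarrow> \<alpha> \<in> C)"

definition unique_colour_for ::
  "'a set set \<Rightarrow> ('a set \<Rightarrow> 'c option) \<Rightarrow> 'a set \<Rightarrow> 'c \<Rightarrow> bool" where
  "unique_colour_for F col e \<alpha> \<longleftrightarrow>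
     (\<exists>e'\<in>open_nbhd F e. col e' = Some \<alpha> \<and>
        (\<forall>e''\<in>closed_nbhd F e - {e'}. col e'' \<noteq> Some \<alpha>))"

definition satisfied :: "'a set set \<Rightarrow> ('a set \<Rightarrow> 'c option) \<Rightarrow> 'a set \<Rightarrow> bool" where
  "satisfied F col e \<longleftrightarrow> (\<exists>\<alpha>. unique_colour_for F col e \<alpha>)"

definition incident_unique :: "'a set set \<Rightarrow> ('a set \<Rightarrow> 'c option) \<Rightarrow> 'a \<Rightarrow> bool" where
  "incident_unique F col v \<longleftrightarrow>
     (\<exists>e\<in>F. v \<in> e \<and> col e \<noteq> None \<and>
        (\<forall>e'\<in>F. v \<in> e' \<and> e' \<noteq> e \<longrightarrow> col e' \<noteq> col e))"

end

theory Submission imports Defs begin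

locale bip =
  fixes V :: "'a set" and F :: "'a set set" and A :: "'a set"
  assumes edges: "\<And>e. e \<in> F \<Longrightarrow> e \<subseteq> V \<and> card e = 2"
  and bipA: "\<And>e. e \<in> F \<Longrightarrow> card (e \<inter> A) = 1"
  and nosingle: "\<not> has_single_edge_component F"
  and cover: "\<forall>v\<in>V. \<exists>e\<in>F. v \<in> e"
begin

definition adj :: "'a \<Rightarrow> 'a \<Rightarrow> bool" where "adj u v \<longleftrightarrow> {u,v} \<in> F"

definition good :: "'a \<Rightarrow> bool" where
  "good g \<longleftrightarrow> (\<exists>c w. adj g c \<and> adj c w \<and> w \<noteq> g)"

definition root :: "'a \<Rightarrow> 'a" where "root x = (SOME g. good g \<and> adj\<^sup>*\<^sup>* x g)"

definition dep :: "'a \<Rightarrow> nat" where "dep x = (LEAST n. (adj ^^ n) (root x) x)"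

lemma adj_sym: "adj u v \<Longrightarrow> adj v u"
  unfolding adj_def by (simp add: insert_commute)

lemma adj_neq: "adj u v \<Longrightarrow> u \<noteq> v"
  unfolding adj_def using edges by fastforce

lemma adj_V: "adj u v \<Longrightarrow> u \<in> V \<and> v \<in> V"
  unfolding adj_def using edges by blast

lemma adj_A: "adj u v \<Longrightarrow> (u \<in> A \<longleftrightarrow> v \<notin> A)"
proof -
  assume a: "adj u v"
  then have c: "card ({u,v} \<inter> A) = 1" using bipA adj_def by blast
  have n: "u \<noteq> v" using a adj_neq by blast
  show ?thesis
  proof (cases "u \<in> A")
    case True
    then show ?thesis using c n by (cases "v \<in> A") auto
  next
    case False
    then show ?thesis using c n by (cases "v \<in> A") auto
  qed
qed

lemma edge_form: "e \<in> F \<Longrightarrow> \<exists>u v. e = {u,v} \<and> u \<noteq> v \<and> adj u v"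
  using edges by (metis adj_def card_2_iff)

lemma reach_sym: "adj\<^sup>*\<^sup>* x y \<Longrightarrow> adj\<^sup>*\<^sup>* y x"
proof -
  have "symp adj" by (simp add: adj_sym sympI)
  then have "symp adj\<^sup>*\<^sup>*" by (rule symp_rtranclp)
  then show "adj\<^sup>*\<^sup>* x y \<Longrightarrow> adj\<^sup>*\<^sup>* y x" by (meson sympD)
qed

lemma root_ex: "x \<in> V \<Longrightarrow> \<exists>g. good g \<and> adj\<^sup>*\<^sup>* x g"
proof -
  assume "x \<in> V"
  then obtain e where e: "e \<in> F" "x \<in> e" using cover by blast
  then obtain u v where uv: "e = {u,v}" "u \<noteq> v" "adj u v" using edge_form by blast
  obtain y where y: "adj x y" using e uv adj_sym by blast
  have "x \<noteq> y" using y adj_neq by blast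
  obtain e' where e': "e' \<in> F" "e' \<inter> {x,y} \<noteq> {}" "e' \<noteq> {x,y}"
    using nosingle y unfolding has_single_edge_component_def adj_def by blast
  then obtain a b where ab: "e' = {a,b}" "a \<noteq> b" "adj a b" using edge_form by blast
  show ?thesis
  proof (cases "x \<in> e'")
    case True
    then obtain z where z: "adj x z" "z \<noteq> y" using ab e' adj_sym
      by (metis insert_commute insertE singletonD)
    then have "good y" unfolding good_def using y adj_sym by blast
    then show ?thesis using y by blast
  next
    case False
    then have "y \<in> e'" using e' by blast
    then obtain z where z: "adj y z" "z \<noteq> x" using ab e' adj_sym False by blast
    then have "good x" unfolding good_def using y by blast
    then show ?thesis by blast
  qed
qed

lemma root_prop: "x \<in> V \<Longrightarrow> good (root x) \<and> adj\<^sup>*\<^sup>* x (root x)"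
  unfolding root_def using root_ex by (rule someI_ex) 

lemma root_eq: "adj\<^sup>*\<^sup>* x y \<Longrightarrow> root x = root y"
proof -
  assume r: "adj\<^sup>*\<^sup>* x y"
  have "\<And>g. adj\<^sup>*\<^sup>* x g \<longleftrightarrow> adj\<^sup>*\<^sup>* y g"
    using r reach_sym by (meson rtranclp_trans)
  then show ?thesis unfolding root_def by simp
qed

lemma root_adj: "adj x y \<Longrightarrow> root x = root y"
  by (rule root_eq) (rule r_into_rtranclp)

lemma root_root: "x \<in> V \<Longrightarrow> root (root x) = root x"
  using root_prop root_eq by metis

lemma parity: "(adj ^^ n) u v \<Longrightarrow> ((u \<in> A) = (v \<in> A)) = even n"
proof (induction n arbitrary: v)
  case 0
  then show ?case by auto
next
  case (Suc n)
  then obtain y where "(adj ^^ n) u y" "adj y v" by (meson relpowp_Suc_E)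
  then show ?case using Suc.IH adj_A by fastforce
qed

lemma dep_ex: "x \<in> V \<Longrightarrow> (adj ^^ dep x) (root x) x"
proof -
  assume "x \<in> V"
  then have "adj\<^sup>*\<^sup>* x (root x)" using root_prop by blast
  then have "adj\<^sup>*\<^sup>* (root x) x" by (rule reach_sym)
  from rtranclp_imp_relpowp[OF this] obtain n where "(adj ^^ n) (root x) x" by (elim exE)
  then show ?thesis unfolding dep_def by (rule LeastI[of "\<lambda>n. (adj ^^ n) (root x) x"])
qed

lemma dep_le: "(adj ^^ m) (root x) x \<Longrightarrow> dep x \<le> m"
  unfolding dep_def by (rule Least_le[of "\<lambda>n. (adj ^^ n) (root x) x"])

lemma dep0: "x \<in> V \<Longrightarrow> (dep x = 0) = (x = root x)"
proof
  assume a: "x \<in> V" "dep x = 0"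
  have "(adj ^^ dep x) (root x) x" using dep_ex a(1) .
  then have "(adj ^^ 0) (root x) x" using a(2) by simp
  then show "x = root x" by simp
next
  assume "x = root x"
  then have "(adj ^^ 0) (root x) x" by simp
  then have "dep x \<le> 0" by (rule dep_le)
  then show "dep x = 0" by simp
qed

lemma dep_adj_le: "adj x y \<Longrightarrow> dep y \<le> Suc (dep x)"
proof -
  assume a: "adj x y"
  have "x \<in> V" using adj_V a by blast
  then have "(adj ^^ dep x) (root x) x" by (rule dep_ex)
  then have "(adj ^^ Suc (dep x)) (root x) y" using a by (rule relpowp_Suc_I)
  then have "(adj ^^ Suc (dep x)) (root y) y" using root_adj[OF a] by simp
  then show ?thesis by (rule dep_le)
qed

lemma dep_adj: "adj x y \<Longrightarrow> dep y = Suc (dep x) \<or> dep x = Suc (dep y)"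
proof -
  assume a: "adj x y"
  have 1: "dep y \<le> Suc (dep x)" using a dep_adj_le by blast
  have 2: "dep x \<le> Suc (dep y)" using a adj_sym dep_adj_le by blast
  have xV: "x \<in> V" and yV: "y \<in> V" using a adj_V by auto
  have rx: "(adj ^^ dep x) (root x) x" using xV by (rule dep_ex)
  have ry0: "(adj ^^ dep y) (root y) y" using yV by (rule dep_ex)
  have ry: "(adj ^^ dep y) (root x) y" using ry0 root_adj[OF a] by simp
  have p1: "((root x \<in> A) = (x \<in> A)) = even (dep x)" using rx by (rule parity)
  have p2: "((root x \<in> A) = (y \<in> A)) = even (dep y)" using ry by (rule parity)
  have "x \<in> A \<longleftrightarrow> y \<notin> A" using a adj_A by blast
  with p1 p2 have "dep x \<noteq> dep y" by auto
  then show ?thesis using 1 2 by linarith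
qed

lemma dep_down: "x \<in> V \<Longrightarrow> 0 < dep x \<Longrightarrow> \<exists>u. adj u x \<and> Suc (dep u) = dep x"
proof -
  assume x: "x \<in> V" "0 < dep x"
  then obtain m where m: "dep x = Suc m" using gr0_implies_Suc by blast
  have "(adj ^^ dep x) (root x) x" using x(1) by (rule dep_ex)
  then have "(adj ^^ Suc m) (root x) x" using m by simp
  then obtain u where u: "(adj ^^ m) (root x) u" "adj u x" by (rule relpowp_Suc_E)
  then have "root u = root x" using root_adj by blast
  then have "(adj ^^ m) (root u) u" using u by simp
  then have "dep u \<le> m" by (rule dep_le)
  moreover have "dep x \<le> Suc (dep u)" using u(2) by (rule dep_adj_le)
  ultimately show ?thesis using u m by (intro exI[of _ u]) auto
qed

lemma dep_root_adj: "adj u x \<Longrightarrow> dep u = 0 \<Longrightarrow> u = root x"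
proof -
  assume a: "adj u x" "dep u = 0"
  then have "u = root u" using dep0 adj_V by blast
  then show ?thesis using root_adj[OF a(1)] by simp
qed

definition c1 :: "'a \<Rightarrow> 'a" where "c1 r = (SOME c. adj r c \<and> (\<exists>w. adj c w \<and> w \<noteq> r))"
definition w1 :: "'a \<Rightarrow> 'a" where "w1 r = (SOME w. adj (c1 r) w \<and> w \<noteq> r)"

lemma c1_prop: "good r \<Longrightarrow> adj r (c1 r) \<and> (\<exists>w. adj (c1 r) w \<and> w \<noteq> r)"
  unfolding c1_def good_def by (rule someI_ex) blast

lemma w1_prop: assumes "good r" shows "adj (c1 r) (w1 r) \<and> w1 r \<noteq> r"
proof -
  have "\<exists>w. adj (c1 r) w \<and> w \<noteq> r" using c1_prop[OF assms] by blast
  then show ?thesis unfolding w1_def by (rule someI_ex)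
qed

definition par :: "'a \<Rightarrow> 'a" where
  "par x = (if dep x = 2 \<and> x \<noteq> w1 (root x) \<and> (\<exists>c. adj c x \<and> dep c = 1 \<and> c \<noteq> c1 (root x))
            then (SOME c. adj c x \<and> dep c = 1 \<and> c \<noteq> c1 (root x))
            else if dep x = 2 then c1 (root x)
            else (SOME u. adj u x \<and> Suc (dep u) = dep x))"

definition cv :: "'a \<Rightarrow> nat" where
  "cv x = (if dep x = 1 then (if x = c1 (root x) then 1 else 3)
           else if dep x = 2 then (if par x = c1 (root x) \<and> x \<noteq> w1 (root x) then 3 else 2)
           else if dep x mod 3 = 0 then 4 else dep x mod 3)"

lemma root_facts:
  assumes x: "x \<in> V" and r: "r = root x"
  shows "dep r = 0" "root r = r" "adj r (c1 r)" "dep (c1 r) = 1" "root (c1 r) = r"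
        "adj (c1 r) (w1 r)" "dep (w1 r) = 2" "root (w1 r) = r" "w1 r \<noteq> r"
proof -
  have g: "good r" using root_prop x r by blast
  show rr: "root r = r" using root_root x r by blast
  have rV: "r \<in> V" using g unfolding good_def using adj_V by blast
  show d0: "dep r = 0" using dep0 rV rr by metis
  show a1: "adj r (c1 r)" using c1_prop g by blast
  show r1: "root (c1 r) = r" using root_adj a1 rr by metis
  show d1: "dep (c1 r) = 1" using dep_adj[OF a1] d0 by simp
  show a2: "adj (c1 r) (w1 r)" and n: "w1 r \<noteq> r" using w1_prop g by blast+
  show r2: "root (w1 r) = r" using root_adj a2 r1 by metis
  have "dep (w1 r) \<noteq> 0" using dep0 a2 adj_V r2 n by metis
  then show "dep (w1 r) = 2" using dep_adj[OF a2] d1 by auto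
qed

lemma par_prop: "x \<in> V \<Longrightarrow> 0 < dep x \<Longrightarrow> adj (par x) x \<and> Suc (dep (par x)) = dep x"
proof -
  assume x: "x \<in> V" "0 < dep x"
  let ?r = "root x"
  have RF: "adj (c1 ?r) (w1 ?r)" "dep (c1 ?r) = 1" using root_facts[OF x(1) refl] by blast+
  show ?thesis
  proof (cases "dep x = 2 \<and> x \<noteq> w1 ?r \<and> (\<exists>c. adj c x \<and> dep c = 1 \<and> c \<noteq> c1 ?r)")
    case True
    have p: "par x = (SOME c. adj c x \<and> dep c = 1 \<and> c \<noteq> c1 ?r)" 
      by (subst par_def) (simp only: if_P[OF True])
    have ex: "\<exists>c. adj c x \<and> dep c = 1 \<and> c \<noteq> c1 ?r" using True by blast
    have "adj (par x) x \<and> dep (par x) = 1 \<and> par x \<noteq> c1 ?r"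
      unfolding p by (rule someI_ex[OF ex])
    then show ?thesis using True by simp
  next
    case False
    note F = False
    show ?thesis
    proof (cases "dep x = 2")
      case True
      have p: "par x = c1 ?r" by (subst par_def) (simp only: if_not_P[OF F] if_P[OF True])
      have "adj (c1 ?r) x"
      proof (cases "x = w1 ?r")
        case True
        then show ?thesis using RF by simp
      next
        case False
        obtain u where u: "adj u x" "Suc (dep u) = dep x" using dep_down x by blast
        then have "dep u = 1" using True by simp
        then have "u = c1 ?r" using F False True u(1) by blast
        then show ?thesis using u by simp
      qed
      then show ?thesis using p True RF by simp
    next
      case False
      have p: "par x = (SOME u. adj u x \<and> Suc (dep u) = dep x)"
        by (subst par_def) (simp only: if_not_P[OF F] if_not_P[OF False])
      have ex: "\<exists>u. adj u x \<and> Suc (dep u) = dep x" using dep_down x by blast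
      show ?thesis unfolding p by (rule someI_ex[OF ex])
    qed
  qed
qed

lemma par_c1: 
  assumes y: "y \<in> V" "dep y = 2" "par y = c1 (root y)" "y \<noteq> w1 (root y)" 
    and c: "adj c y" "dep c = 1"
  shows "c = c1 (root y)"
proof (rule ccontr)
  assume n: "c \<noteq> c1 (root y)"
  let ?P = "\<lambda>c. adj c y \<and> dep c = 1 \<and> c \<noteq> c1 (root y)"
  have ex: "\<exists>c. ?P c" using c n by blast
  have T: "dep y = 2 \<and> y \<noteq> w1 (root y) \<and> (\<exists>c. ?P c)" using y ex by blast
  have p: "par y = (SOME c. ?P c)" by (subst par_def) (simp only: if_P[OF T])
  have "?P (SOME c. ?P c)" by (rule someI_ex[OF ex])
  then show False using p y(3) by simp
qed

lemma par_dep1: "x \<in> V \<Longrightarrow> dep x = 1 \<Longrightarrow> par x = root x"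
proof -
  assume x: "x \<in> V" "dep x = 1"
  then have "adj (par x) x" "Suc (dep (par x)) = dep x" using par_prop by auto
  then show ?thesis using dep_root_adj x by simp
qed

lemma root_of_par: "x \<in> V \<Longrightarrow> 0 < dep x \<Longrightarrow> root (par x) = root x"
  using par_prop root_adj by blast

lemma cv1: "dep x = 1 \<Longrightarrow> cv x = (if x = c1 (root x) then 1 else 3)"
  unfolding cv_def by simp

lemma cv2: "dep x = 2 \<Longrightarrow> cv x = (if par x = c1 (root x) \<and> x \<noteq> w1 (root x) then 3 else 2)"
  unfolding cv_def by simp

lemma cv3: "3 \<le> dep x \<Longrightarrow> cv x = (if dep x mod 3 = 0 then 4 else dep x mod 3)"
  unfolding cv_def by simp

lemma cv_range: "cv x \<in> {1..4}"
proof -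
  have "dep x mod 3 < 3" by simp
  then show ?thesis unfolding cv_def by auto
qed

lemma P2:
  assumes a: "adj x y" and d: "dep y = Suc (dep x)" and p: "0 < dep x"
  shows "cv y \<noteq> cv x"
proof -
  have xV: "x \<in> V" and yV: "y \<in> V" using a adj_V by auto
  have rr: "root y = root x" using root_adj[OF a] by simp
  consider "dep x = 1" | "dep x = 2" | "3 \<le> dep x" using p by linarith
  then show ?thesis
  proof cases
    case 1
    then have dy: "dep y = 2" using d by simp
    show ?thesis
    proof (cases "x = c1 (root x)")
      case True
      then show ?thesis using cv1[OF 1] cv2[OF dy] by auto
    next
      case False
      show ?thesis
      proof
        assume eq: "cv y = cv x"
        then have "cv y = 3" using cv1[OF 1] False by simp
        then have "par y = c1 (root y) \<and> y \<noteq> w1 (root y)" using cv2[OF dy] by presburger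
        then have "x = c1 (root y)" using par_c1 yV dy a 1 by blast
        then show False using False rr by simp
      qed
    qed
  next
    case 2
    then have "dep y = 3" using d by simp
    then have "cv y = 4" using cv3 by simp
    moreover have "cv x \<in> {2,3}" using cv2[OF 2] by simp
    ultimately show ?thesis by auto
  next
    case 3
    then have "3 \<le> dep y" using d by simp
    then have "cv y = (if dep y mod 3 = 0 then 4 else dep y mod 3)" by (rule cv3)
    moreover have "cv x = (if dep x mod 3 = 0 then 4 else dep x mod 3)" using 3 by (rule cv3)
    moreover have "dep y mod 3 \<noteq> dep x mod 3" using d by presburger
    moreover have "dep y mod 3 < 3" "dep x mod 3 < 3" by auto
    ultimately show ?thesis by auto
  qed
qed

lemma P3:
  assumes d: "dep z = dep x + 2" and p: "0 < dep x"
  shows "cv z \<noteq> cv x"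
proof -
  consider "dep x = 1" | "dep x = 2" | "3 \<le> dep x" using p by linarith
  then show ?thesis
  proof cases
    case 1
    then have "dep z = 3" using d by simp
    then have "cv z = 4" using cv3 by simp
    moreover have "cv x \<in> {1,3}" using cv1[OF 1] by simp
    ultimately show ?thesis by auto
  next
    case 2
    then have "dep z = 4" using d by simp
    then have "cv z = 1" using cv3 by simp
    moreover have "cv x \<in> {2,3}" using cv2[OF 2] by simp
    ultimately show ?thesis by auto
  next
    case 3
    then have "3 \<le> dep z" using d by simp
    then have "cv z = (if dep z mod 3 = 0 then 4 else dep z mod 3)" by (rule cv3)
    moreover have "cv x = (if dep x mod 3 = 0 then 4 else dep x mod 3)" using 3 by (rule cv3)
    moreover have "dep z mod 3 \<noteq> dep x mod 3" using d by presburger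
    moreover have "dep z mod 3 < 3" "dep x mod 3 < 3" by auto
    ultimately show ?thesis by auto
  qed
qed

definition col :: "'a set \<Rightarrow> nat option" where
  "col e = (if \<exists>x. x \<in> V \<and> 0 < dep x \<and> e = {x, par x}
            then Some (cv (SOME x. x \<in> V \<and> 0 < dep x \<and> e = {x, par x})) else None)"

lemma tree_unique:
  assumes x: "x \<in> V" "0 < dep x" and y: "y \<in> V" "0 < dep y" and eq: "{x, par x} = {y, par y}"
  shows "y = x"
proof (rule ccontr)
  assume n: "y \<noteq> x"
  then have "y = par x" "x = par y" using eq by (auto simp: doubleton_eq_iff)
  then show False using par_prop[OF x] par_prop[OF y] by simp
qed

lemma col_tree: "x \<in> V \<Longrightarrow> 0 < dep x \<Longrightarrow> col {x, par x} = Some (cv x)"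
proof -
  assume x: "x \<in> V" "0 < dep x"
  let ?P = "\<lambda>y. y \<in> V \<and> 0 < dep y \<and> {x, par x} = {y, par y}"
  have ex: "\<exists>y. ?P y" using x by blast
  have "?P (SOME y. ?P y)" by (rule someI_ex[OF ex])
  then have "(SOME y. ?P y) = x" using tree_unique x by blast
  then show ?thesis unfolding col_def using ex by simp
qed

lemma col_Some: "col e = Some k \<Longrightarrow> \<exists>x. x \<in> V \<and> 0 < dep x \<and> e = {x, par x} \<and> k = cv x"
proof -
  assume c: "col e = Some k"
  then have "\<exists>x. x \<in> V \<and> 0 < dep x \<and> e = {x, par x}" unfolding col_def by (auto split: if_splits)
  then obtain x where x: "x \<in> V" "0 < dep x" "e = {x, par x}" by blast
  then have "k = cv x" using col_tree c by simp
  then show ?thesis using x by blast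
qed

lemma tree_edge: "x \<in> V \<Longrightarrow> 0 < dep x \<Longrightarrow> {x, par x} \<in> F"
  using par_prop adj_def by (metis insert_commute)

lemma colouring: "partial_edge_colouring F {1..4} col"
  unfolding partial_edge_colouring_def using col_Some cv_range by blast

lemma vertex_ok: assumes x: "x \<in> V" shows "incident_unique F col x"
proof (cases "0 < dep x")
  case True
  let ?e = "{x, par x}"
  have c: "col ?e = Some (cv x)" using col_tree x True by blast
  have "\<forall>e'\<in>F. x \<in> e' \<and> e' \<noteq> ?e \<longrightarrow> col e' \<noteq> col ?e"
  proof (intro ballI impI notI)
    fix e' assume e': "e' \<in> F" "x \<in> e' \<and> e' \<noteq> ?e" "col e' = col ?e"
    then obtain v where v: "v \<in> V" "0 < dep v" "e' = {v, par v}" "cv x = cv v"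
      using col_Some c by metis
    have "v \<noteq> x" using v e' by blast
    then have px: "par v = x" using v e' by blast
    have "adj x v" "dep v = Suc (dep x)" using par_prop[OF v(1,2)] px by auto
    then show False using P2 True v(4) by metis
  qed
  then show ?thesis unfolding incident_unique_def using tree_edge x True c by blast
next
  case False
  then have d0: "dep x = 0" by simp
  let ?r = "root x"
  have r: "x = ?r" using dep0 x d0 by blast
  have RF: "adj ?r (c1 ?r)" "dep (c1 ?r) = 1" "root (c1 ?r) = ?r"
    using root_facts[OF x refl] by blast+
  have cV: "c1 ?r \<in> V" using RF adj_V by blast
  have pc: "par (c1 ?r) = ?r" using par_dep1[OF cV RF(2)] RF(3) by simp
  let ?e = "{c1 ?r, ?r}"
  have c: "col ?e = Some 1" using col_tree[OF cV] RF pc cv1 by simp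
  have eF: "?e \<in> F" using tree_edge[OF cV] RF pc by simp
  have "\<forall>e'\<in>F. x \<in> e' \<and> e' \<noteq> ?e \<longrightarrow> col e' \<noteq> col ?e"
  proof (intro ballI impI notI)
    fix e' assume e': "e' \<in> F" "x \<in> e' \<and> e' \<noteq> ?e" "col e' = col ?e"
    then obtain v where v: "v \<in> V" "0 < dep v" "e' = {v, par v}" "1 = cv v"
      using col_Some c by metis
    have "v \<noteq> x" using v d0 by auto
    then have px: "par v = x" using v e' by blast
    have dv: "dep v = 1" using par_prop[OF v(1,2)] px d0 by simp
    have "root v = ?r" using root_of_par[OF v(1,2)] px r by simp
    then have "v = c1 ?r" using cv1[OF dv] v(4) by (auto split: if_splits)
    then show False using e' v px r by (simp add: insert_commute)
  qed
  then show ?thesis unfolding incident_unique_def using eF c r by (metis insertI2 singletonI option.simps(3))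
qed

lemma edge_ok_dir:
  assumes a: "adj x y" and d: "dep y = Suc (dep x)"
  shows "satisfied F col {x,y}"
proof -
  have xV: "x \<in> V" and yV: "y \<in> V" using a adj_V by auto
  have eF: "{x,y} \<in> F" using a adj_def by simp
  have ry: "root y = root x" using root_adj[OF a] by simp
  have dy: "0 < dep y" using d by simp
  show ?thesis
  proof (cases "0 < dep x")
    case True
    let ?e = "{x, par x}"
    have pp: "adj (par x) x" "Suc (dep (par x)) = dep x" using par_prop xV True by auto
    have c: "col ?e = Some (cv x)" using col_tree xV True by blast
    have ne: "?e \<noteq> {x,y}"
    proof
      assume "?e = {x,y}"
      then have "par x \<in> {x,y}" by blast
      then show False using pp d by auto
    qed
    have op: "?e \<in> open_nbhd F {x,y}"
      unfolding open_nbhd_def closed_nbhd_def using tree_edge xV True ne by blast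
    have "\<forall>e''\<in>closed_nbhd F {x,y} - {?e}. col e'' \<noteq> Some (cv x)"
    proof (intro ballI notI)
      fix e'' assume e'': "e'' \<in> closed_nbhd F {x,y} - {?e}" "col e'' = Some (cv x)"
      then obtain v where v: "v \<in> V" "0 < dep v" "e'' = {v, par v}" "cv x = cv v"
        using col_Some by metis
      have pv: "adj (par v) v" "Suc (dep (par v)) = dep v" using par_prop v(1,2) by auto
      have meet: "v = x \<or> v = y \<or> par v = x \<or> par v = y"
        using e'' v unfolding closed_nbhd_def by blast
      have "v \<noteq> x" using e'' v by blast
      moreover have "v \<noteq> y" using P2[OF a d True] v(4) by metis
      moreover have "par v \<noteq> x"
      proof
        assume "par v = x"
        then have "adj x v" "dep v = Suc (dep x)" using pv by auto
        then show False using P2 True v(4) by metis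
      qed
      moreover have "par v \<noteq> y"
      proof
        assume "par v = y"
        then have "dep v = dep x + 2" using pv d by simp
        then show False using P3 True v(4) by metis
      qed
      ultimately show False using meet by blast
    qed
    then show ?thesis unfolding satisfied_def unique_colour_for_def using op c by blast
  next
    case False
    then have d0: "dep x = 0" by simp
    let ?r = "root x"
    have r: "x = ?r" using dep0 xV d0 by blast
    have d1: "dep y = 1" using d d0 by simp
    have RF: "adj ?r (c1 ?r)" "dep (c1 ?r) = 1" "root (c1 ?r) = ?r"
        "adj (c1 ?r) (w1 ?r)" "dep (w1 ?r) = 2" "root (w1 ?r) = ?r" "w1 ?r \<noteq> ?r"
      using root_facts[OF xV refl] by blast+
    have cV: "c1 ?r \<in> V" using RF adj_V by blast
    have wV: "w1 ?r \<in> V" using RF adj_V by blast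
    have pc: "par (c1 ?r) = ?r" using par_dep1[OF cV RF(2)] RF(3) by simp
    have cc: "cv (c1 ?r) = 1" using cv1[OF RF(2)] RF(3) by simp
    show ?thesis
    proof (cases "y = c1 ?r")
      case True
      have ncond: "\<not> (dep (w1 ?r) = 2 \<and> w1 ?r \<noteq> w1 (root (w1 ?r)) \<and>
          (\<exists>c. adj c (w1 ?r) \<and> dep c = 1 \<and> c \<noteq> c1 (root (w1 ?r))))" using RF by simp
      have pw: "par (w1 ?r) = c1 ?r"
        by (subst par_def) (simp only: RF(6) RF(5) simp_thms if_False if_True)
      have cw: "cv (w1 ?r) = 2" using cv2[OF RF(5)] RF(6) by simp
      let ?e = "{w1 ?r, c1 ?r}"
      have c: "col ?e = Some 2" using col_tree[OF wV] RF pw cw by simp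
      have wne: "w1 ?r \<noteq> c1 ?r" using RF(4) adj_neq by metis
      have ne: "?e \<noteq> {x,y}" using True r RF(7) wne by (auto simp: doubleton_eq_iff)
      have eF': "?e \<in> F" using tree_edge[OF wV] RF pw by simp
      have op: "?e \<in> open_nbhd F {x,y}"
        unfolding open_nbhd_def closed_nbhd_def using eF' ne True by blast
      have "\<forall>e''\<in>closed_nbhd F {x,y} - {?e}. col e'' \<noteq> Some 2"
      proof (intro ballI notI)
        fix e'' assume e'': "e'' \<in> closed_nbhd F {x,y} - {?e}" "col e'' = Some 2"
        then obtain v where v: "v \<in> V" "0 < dep v" "e'' = {v, par v}" "2 = cv v"
          using col_Some by metis
        have pv: "adj (par v) v" "Suc (dep (par v)) = dep v" using par_prop v(1,2) by auto
        have meet: "v = x \<or> v = y \<or> par v = x \<or> par v = y"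
          using e'' v unfolding closed_nbhd_def by blast
        have "v \<noteq> x" using v d0 by auto
        moreover have "v \<noteq> y" using True cc v(4) by auto
        moreover have "par v \<noteq> x"
        proof
          assume "par v = x"
          then have dv: "dep v = 1" using pv d0 by simp
          show False using cv1[OF dv] v(4) by (auto split: if_splits)
        qed
        moreover have "par v \<noteq> y"
        proof
          assume pvy: "par v = y"
          then have dv: "dep v = 2" using pv d1 by simp
          have rv: "root v = ?r" using root_of_par[OF v(1,2)] pvy True RF(3) by simp
          have "\<not> (par v = c1 (root v) \<and> v \<noteq> w1 (root v))"
            using cv2[OF dv] v(4) by (auto split: if_splits)
          then have "v = w1 ?r" using rv pvy True by simp
          then show False using e'' v pvy True by (simp add: insert_commute)
        qed
        ultimately show False using meet by blast
      qed
      then show ?thesis unfolding satisfied_def unique_colour_for_def using op c by blast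
    next
      case False
      let ?e = "{c1 ?r, ?r}"
      have c: "col ?e = Some 1" using col_tree[OF cV] RF pc cc by simp
      have cne: "c1 ?r \<noteq> ?r" using RF(1) adj_neq by metis
      have ne: "?e \<noteq> {x,y}" using False r cne by (auto simp: doubleton_eq_iff)
      have eF': "?e \<in> F" using tree_edge[OF cV] RF pc by simp
      have op: "?e \<in> open_nbhd F {x,y}"
        unfolding open_nbhd_def closed_nbhd_def using eF' ne r by blast
      have "\<forall>e''\<in>closed_nbhd F {x,y} - {?e}. col e'' \<noteq> Some 1"
      proof (intro ballI notI)
        fix e'' assume e'': "e'' \<in> closed_nbhd F {x,y} - {?e}" "col e'' = Some 1"
        then obtain v where v: "v \<in> V" "0 < dep v" "e'' = {v, par v}" "1 = cv v"
          using col_Some by metis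
        have pv: "adj (par v) v" "Suc (dep (par v)) = dep v" using par_prop v(1,2) by auto
        have meet: "v = x \<or> v = y \<or> par v = x \<or> par v = y"
          using e'' v unfolding closed_nbhd_def by blast
        have "v \<noteq> x" using v d0 by auto
        moreover have "v \<noteq> y" using cv1[OF d1] False ry v(4) by (auto split: if_splits)
        moreover have "par v \<noteq> x"
        proof
          assume pvx: "par v = x"
          then have dv: "dep v = 1" using pv d0 by simp
          have rv: "root v = ?r" using root_of_par[OF v(1,2)] pvx r by simp
          have "v = c1 ?r" using cv1[OF dv] v(4) rv by (auto split: if_splits)
          then show False using e'' v pvx r by (simp add: insert_commute)
        qed
        moreover have "par v \<noteq> y"
        proof
          assume "par v = y"
          then have dv: "dep v = 2" using pv d1 by simp
          show False using cv2[OF dv] v(4) by (auto split: if_splits)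
        qed
        ultimately show False using meet by blast
      qed
      then show ?thesis unfolding satisfied_def unique_colour_for_def using op c by blast
    qed
  qed
qed

lemma edge_ok: assumes e: "e \<in> F" shows "satisfied F col e"
proof -
  obtain u v where uv: "e = {u,v}" "adj u v" using edge_form e by blast
  consider "dep v = Suc (dep u)" | "dep u = Suc (dep v)" using dep_adj uv by blast
  then show ?thesis
  proof cases
    case 1 then show ?thesis using edge_ok_dir uv by simp
  next
    case 2
    have "satisfied F col {v,u}" using edge_ok_dir[OF adj_sym[OF uv(2)] 2] .
    then show ?thesis using uv(1) by (simp add: insert_commute)
  qed
qed

end

theorem mainTheorem7:
  fixes V :: "'a set" and F :: "'a set set"
  assumes "simple_graph V F"
    and "bipartite V F"
    and "\<not> has_single_edge_component F"
    and "\<forall>v\<in>V. \<exists>e\<in>F. v \<in> e"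
  shows "\<exists>col :: 'a set \<Rightarrow> nat option.
           partial_edge_colouring F {1..4} col \<and>
           (\<forall>e\<in>F. satisfied F col e) \<and>
           (\<forall>v\<in>V. incident_unique F col v)"
proof -
  obtain A B where AB: "\<forall>e\<in>F. card (e \<inter> A) = 1 \<and> card (e \<inter> B) = 1"
    using assms(2) unfolding bipartite_def by blast
  interpret bip V F A
  proof
    show "\<And>e. e \<in> F \<Longrightarrow> e \<subseteq> V \<and> card e = 2" using assms(1) unfolding simple_graph_def by blast
    show "\<And>e. e \<in> F \<Longrightarrow> card (e \<inter> A) = 1" using AB by blast
  qed (use assms in auto)
  show ?thesis using colouring edge_ok vertex_ok by blast
qed

end
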